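(* Let $\lambda\in(0,\tfrac12)$ and let $G$ be a finite simple connected graph with $n$ vertices. Then $$mt^{e}_{\lambda}(G)\le (n-1)\lambda,$$ and equality holds when $G$ is the complete graph $K_n$ (at any of its vertices).
   Context: $d(u,v)$ denotes graph distance. For a vertex $u$ of $G=(V,E)$, $t^{e}_{\lambda}(u)=\sum_{v\in V\setminus\{u\}} d(u,v)\lambda^{d(u,v)}$, and $mt^{e}_{\lambda}(G)=\min\{t^{e}_{\lambda}(u):u\in V\}$. *)

theory Defs
  imports Complex_Main
begin

definition simple_graph :: "'a set \<Rightarrow> ('a \<Rightarrow> 'a \<Rightarrow> bool) \<Rightarrow> bool" where
  "simple_graph V E \<longleftrightarrow> finite V \<and> (\<forall>x y. E x y \<longrightarrow> E y x) \<and> (\<forall>x. \<not> E x x)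
     \<and> (\<forall>x y. E x y \<longrightarrow> x \<in> V \<and> y \<in> V)"

definition adj :: "'a set \<Rightarrow> ('a \<Rightarrow> 'a \<Rightarrow> bool) \<Rightarrow> 'a \<Rightarrow> 'a \<Rightarrow> bool" where
  "adj V E x y \<longleftrightarrow> x \<in> V \<and> y \<in> V \<and> E x y"

text \<open>There is a walk of length k from u to v iff (adj V E ^^ k) u v.\<close>
definition connected_graph :: "'a set \<Rightarrow> ('a \<Rightarrow> 'a \<Rightarrow> bool) \<Rightarrow> bool" where
  "connected_graph V E \<longleftrightarrow> V \<noteq> {} \<and> (\<forall>u\<in>V. \<forall>v\<in>V. \<exists>k. (adj V E ^^ k) u v)"

definition gdist :: "'a set \<Rightarrow> ('a \<Rightarrow> 'a \<Rightarrow> bool) \<Rightarrow> 'a \<Rightarrow> 'a \<Rightarrow> nat" where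
  "gdist V E u v = (LEAST k. (adj V E ^^ k) u v)"

definition complete_graph :: "'a set \<Rightarrow> ('a \<Rightarrow> 'a \<Rightarrow> bool) \<Rightarrow> bool" where
  "complete_graph V E \<longleftrightarrow> (\<forall>x\<in>V. \<forall>y\<in>V. x \<noteq> y \<longrightarrow> E x y)"

definition te :: "real \<Rightarrow> 'a set \<Rightarrow> ('a \<Rightarrow> 'a \<Rightarrow> bool) \<Rightarrow> 'a \<Rightarrow> real" where
  "te lam V E u = (\<Sum>v\<in>V - {u}. real (gdist V E u v) * lam ^ gdist V E u v)"

definition mte :: "real \<Rightarrow> 'a set \<Rightarrow> ('a \<Rightarrow> 'a \<Rightarrow> bool) \<Rightarrow> real" where
  "mte lam V E = Min ((\<lambda>u. te lam V E u) ` V)"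

end

theory Submission
  imports Defs
begin

lemma term_le:
  fixes lam :: real assumes "0 < lam" "lam < 1/2"
  shows "real d * lam ^ d \<le> lam"
proof (induction d)
  case 0 then show ?case using assms by simp
next
  case (Suc d)
  show ?case
  proof (cases "d = 0")
    case True then show ?thesis by simp
  next
    case False
    have "real (Suc d) * lam \<le> real (Suc d) / 2" using assms by simp
    also have "\<dots> \<le> real d" using False by simp
    finally have "real (Suc d) * lam \<le> real d" .
    hence "real (Suc d) * lam * lam ^ d \<le> real d * lam ^ d"
      using assms by (intro mult_right_mono) auto
    hence "real (Suc d) * lam ^ Suc d \<le> real d * lam ^ d" by (simp add: algebra_simps)
    then show ?thesis using Suc.IH by linarith
  qed
qed

lemma te_le:
  assumes "0 < lam" "lam < 1/2" "finite V" "u \<in> V"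
  shows "te lam V E u \<le> real (card V - 1) * lam"
proof -
  have "te lam V E u \<le> (\<Sum>v\<in>V - {u}. lam)"
    unfolding te_def by (rule sum_mono) (rule term_le[OF assms(1,2)])
  also have "\<dots> = real (card V - 1) * lam" using assms by simp
  finally show ?thesis .
qed

lemma gdist_complete:
  assumes "complete_graph V E" "u \<in> V" "v \<in> V" "u \<noteq> v"
  shows "gdist V E u v = 1"
proof -
  have a: "(adj V E ^^ 1) u v" using assms by (auto simp: adj_def complete_graph_def)
  have b: "\<not> (adj V E ^^ 0) u v" using assms by simp
  show ?thesis unfolding gdist_def
  proof (rule Least_equality)
    show "(adj V E ^^ 1) u v" by (rule a)
    fix y assume "(adj V E ^^ y) u v"
    with b show "1 \<le> y" by (cases y) auto
  qed
qed

theorem theorem4: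
  fixes V :: "'a set" and E :: "'a \<Rightarrow> 'a \<Rightarrow> bool" and lam :: real and n :: nat
  assumes "0 < lam" and "lam < 1/2"
    and "simple_graph V E" and "connected_graph V E" and "card V = n"
  shows "mte lam V E \<le> real (n - 1) * lam
    \<and> (complete_graph V E \<longrightarrow>
         mte lam V E = real (n - 1) * lam \<and> (\<forall>u\<in>V. te lam V E u = real (n - 1) * lam))"
proof -
  have fin: "finite V" using assms(3) by (simp add: simple_graph_def)
  have ne: "V \<noteq> {}" using assms(4) by (simp add: connected_graph_def)
  then obtain u where u: "u \<in> V" by blast
  have le: "mte lam V E \<le> real (n - 1) * lam"
  proof -
    have "mte lam V E \<le> te lam V E u" unfolding mte_def using fin u by (intro Min_le) auto
    also have "\<dots> \<le> real (n - 1) * lam" using te_le[OF assms(1,2) fin u] assms(5) by simp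
    finally show ?thesis .
  qed
  moreover have "complete_graph V E \<longrightarrow>
         mte lam V E = real (n - 1) * lam \<and> (\<forall>u\<in>V. te lam V E u = real (n - 1) * lam)"
  proof
    assume c: "complete_graph V E"
    have all: "\<forall>w\<in>V. te lam V E w = real (n - 1) * lam"
    proof
      fix w assume w: "w \<in> V"
      have "te lam V E w = (\<Sum>v\<in>V - {w}. lam)"
        unfolding te_def by (rule sum.cong) (use gdist_complete[OF c w] in auto)
      then show "te lam V E w = real (n - 1) * lam" using fin w assms(5) by simp
    qed
    have "(\<lambda>u. te lam V E u) ` V = {real (n - 1) * lam}" using all ne by auto
    then have "mte lam V E = real (n - 1) * lam" unfolding mte_def by simp
    with all show "mte lam V E = real (n - 1) * lam \<and> (\<forall>u\<in>V. te lam V E u = real (n - 1) * lam)" by blast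
  qed
  ultimately show ?thesis by blast
qed

end
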